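(* Let $H$ be a complex Hilbert space and $\{\mathcal{U}(t)\}_{t\geq 0}$ a strongly continuous semigroup on $H$ with generator $\mathcal{L}$. Let $z\in D(\mathcal{L})\cap D(\mathcal{L}^\dagger)$ with $z\neq0$, $\mathcal{P}:=(\cdot,z)(z,z)^{-1}z$, $\mathcal{Q}:=1-\mathcal{P}$. For $K:\mathbb{R}_+\to\mathbb{C}$ and $\eta:\mathbb{R}_+\to H$ consider the system $$\frac{d}{dt}\mathcal{U}(t)z=\mathcal{U}(t)\mathcal{PL}z+\eta_t+\int_0^tK(t-s)\,\mathcal{U}(s)z\,ds,\qquad K(t)=(\eta_t,\mathcal{Q}\mathcal{L}^\dagger z)(z,z)^{-1},$$ for all $t\ge0$. This system has a unique solution $(K,\eta)$. The memory kernel $K$ is the unique continuous solution of the Volterra equation $$K(t)=(\mathcal{U}(t)\mathcal{QL}z,\mathcal{Q}\mathcal{L}^\dagger z)(z,z)^{-1}-\int_0^tK(t-s)\,(\mathcal{U}(s)z,\mathcal{Q}\mathcal{L}^\dagger z)(z,z)^{-1}\,ds,$$ and $\eta_t=\mathcal{U}(t)\mathcal{QL}z-\int_0^tK(t-s)\,\mathcal{U}(s)z\,ds$.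
   Context: The scalar product $(\cdot,\cdot)$ on $H$ is conjugate-linear in its second argument. The generator is $\mathcal{L}x:=\lim_{h\searrow 0}\frac1h[\mathcal{U}(h)x-x]$ on the set $D(\mathcal{L})$ where the limit exists; $\dagger$ denotes the adjoint. Vector-valued integrals are Bochner integrals. *)

theory Defs
  imports "HOL-Analysis.Analysis"
begin

text \<open>Complex Hilbert space: a real Banach space with a complex scalar multiplication
  and a complex inner product, conjugate-linear in its second argument, inducing the norm.\<close>

class complex_hilbert = banach +
  fixes cscale :: "complex \<Rightarrow> 'a \<Rightarrow> 'a" (infixr \<open>*\<^sub>C\<close> 75)
    and cinner :: "'a \<Rightarrow> 'a \<Rightarrow> complex"
  assumes cscale_add_right: "a *\<^sub>C (x + y) = a *\<^sub>C x + a *\<^sub>C y"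
    and cscale_add_left: "(a + b) *\<^sub>C x = a *\<^sub>C x + b *\<^sub>C x"
    and cscale_cscale: "a *\<^sub>C (b *\<^sub>C x) = (a * b) *\<^sub>C x"
    and cscale_one: "1 *\<^sub>C x = x"
    and scaleR_cscale: "r *\<^sub>R x = complex_of_real r *\<^sub>C x"
    and cinner_add_left: "cinner (x + y) w = cinner x w + cinner y w"
    and cinner_cscale_left: "cinner (a *\<^sub>C x) y = a * cinner x y"
    and cinner_commute: "cinner y x = cnj (cinner x y)"
    and cinner_self_norm: "cinner x x = complex_of_real ((norm x)\<^sup>2)"

definition C0_semigroup :: "(real \<Rightarrow> 'a::complex_hilbert \<Rightarrow> 'a) \<Rightarrow> bool" where
  "C0_semigroup U \<longleftrightarrow>
     (\<forall>t\<ge>0. bounded_linear (U t) \<and> (\<forall>c x. U t (c *\<^sub>C x) = c *\<^sub>C U t x)) \<and>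
     U 0 = id \<and>
     (\<forall>s\<ge>0. \<forall>t\<ge>0. U (s + t) = U s \<circ> U t) \<and>
     (\<forall>x. continuous_on {0..} (\<lambda>t. U t x))"

definition gen_dom :: "(real \<Rightarrow> 'a::complex_hilbert \<Rightarrow> 'a) \<Rightarrow> 'a set" where
  "gen_dom U = {x. \<exists>y. ((\<lambda>h. (1 / h) *\<^sub>R (U h x - x)) \<longlongrightarrow> y) (at_right 0)}"

definition gen :: "(real \<Rightarrow> 'a::complex_hilbert \<Rightarrow> 'a) \<Rightarrow> 'a \<Rightarrow> 'a" where
  "gen U x = Lim (at_right 0) (\<lambda>h. (1 / h) *\<^sub>R (U h x - x))"

definition adj_dom :: "'a::complex_hilbert set \<Rightarrow> ('a \<Rightarrow> 'a) \<Rightarrow> 'a set" where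
  "adj_dom D A = {y. \<exists>w. \<forall>x\<in>D. cinner (A x) y = cinner x w}"

definition adj :: "'a::complex_hilbert set \<Rightarrow> ('a \<Rightarrow> 'a) \<Rightarrow> 'a \<Rightarrow> 'a" where
  "adj D A y = (THE w. \<forall>x\<in>D. cinner (A x) y = cinner x w)"

definition projP :: "'a::complex_hilbert \<Rightarrow> 'a \<Rightarrow> 'a" where
  "projP z x = (cinner x z / cinner z z) *\<^sub>C z"

definition projQ :: "'a::complex_hilbert \<Rightarrow> 'a \<Rightarrow> 'a" where
  "projQ z x = x - projP z x"

definition gle_system ::
  "(real \<Rightarrow> 'a::complex_hilbert \<Rightarrow> 'a) \<Rightarrow> 'a \<Rightarrow> (real \<Rightarrow> complex) \<Rightarrow> (real \<Rightarrow> 'a) \<Rightarrow> bool" where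
  "gle_system U z K \<eta> \<longleftrightarrow>
     (\<forall>t\<ge>0. K absolutely_integrable_on {0..t}) \<and>
     (\<forall>t\<ge>0.
        ((\<lambda>s. U s z) has_vector_derivative
           (U t (projP z (gen U z)) + \<eta> t + integral {0..t} (\<lambda>s. K (t - s) *\<^sub>C U s z)))
          (at t within {0..}) \<and>
        K t = cinner (\<eta> t) (projQ z (adj (gen_dom U) (gen U) z)) / cinner z z)"

definition volterra_eq :: "(real \<Rightarrow> 'a::complex_hilbert \<Rightarrow> 'a) \<Rightarrow> 'a \<Rightarrow> (real \<Rightarrow> complex) \<Rightarrow> real \<Rightarrow> bool" where
  "volterra_eq U z K t \<longleftrightarrow>
     K t = cinner (U t (projQ z (gen U z))) (projQ z (adj (gen_dom U) (gen U) z)) / cinner z z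
           - integral {0..t} (\<lambda>s. K (t - s) *
               (cinner (U s z) (projQ z (adj (gen_dom U) (gen U) z)) / cinner z z))"

end

theory Submission
  imports Defs
begin
section \<open>Algebra of complex Hilbert class\<close>


lemma cscale_zero_left [simp]: "0 *\<^sub>C (x::'a::complex_hilbert) = 0"
  using cscale_add_left[of 0 0 x] by simp

lemma cscale_zero_right [simp]: "a *\<^sub>C 0 = 0"
  using cscale_add_right[of a 0 0] by simp

lemma cscale_minus_right: "a *\<^sub>C (- x) = - (a *\<^sub>C x)"
proof -
  have "a *\<^sub>C x + a *\<^sub>C (- x) = 0" using cscale_add_right[of a x "-x"] by simp
  from minus_unique[OF this] show ?thesis by (rule sym)
qed

lemma cscale_diff_right: "a *\<^sub>C (x - y) = a *\<^sub>C x - a *\<^sub>C y"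
  by (simp only: diff_conv_add_uminus cscale_add_right cscale_minus_right)

lemma cscale_minus_left: "(- a) *\<^sub>C x = - (a *\<^sub>C x)"
proof -
  have "a *\<^sub>C x + (- a) *\<^sub>C x = 0" using cscale_add_left[of a "-a" x] by simp
  from minus_unique[OF this] show ?thesis by (rule sym)
qed

lemma cscale_diff_left: "(a - b) *\<^sub>C x = a *\<^sub>C x - b *\<^sub>C x"
  by (simp only: diff_conv_add_uminus cscale_add_left cscale_minus_left)

lemma scaleR_cscale_commute: "r *\<^sub>R (a *\<^sub>C x) = a *\<^sub>C (r *\<^sub>R x)"
  by (metis scaleR_cscale cscale_cscale mult.commute)

lemma scaleR_cscale_left: "(r *\<^sub>R a) *\<^sub>C x = r *\<^sub>R (a *\<^sub>C x)"
  by (metis scaleR_conv_of_real scaleR_cscale cscale_cscale)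

lemma cinner_zero_left [simp]: "cinner 0 y = 0"
  using cinner_add_left[of 0 0 y] by simp

lemma cinner_minus_left: "cinner (- x) y = - cinner x y"
proof -
  have "cinner x y + cinner (- x) y = 0" using cinner_add_left[of x "-x" y] by simp
  from minus_unique[OF this] show ?thesis by (rule sym)
qed

lemma cinner_diff_left: "cinner (x - y) w = cinner x w - cinner y w"
  by (simp only: diff_conv_add_uminus cinner_add_left cinner_minus_left)

lemma cinner_scaleR_left: "cinner (r *\<^sub>R x) y = of_real r * cinner x y"
  by (simp add: scaleR_cscale cinner_cscale_left)

lemma cinner_add_right: "cinner x (y + w) = cinner x y + cinner x w"
  by (metis cinner_commute cinner_add_left complex_cnj_add)

lemma cinner_cscale_right: "cinner x (a *\<^sub>C y) = cnj a * cinner x y"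
  by (metis cinner_commute cinner_cscale_left complex_cnj_mult)

lemma norm_cscale: "norm (a *\<^sub>C x) = cmod a * norm x"
proof -
  have "cinner (a *\<^sub>C x) (a *\<^sub>C x) = (a * cnj a) * cinner x x"
    by (simp add: cinner_cscale_left cinner_cscale_right)
  hence "complex_of_real ((norm (a *\<^sub>C x))\<^sup>2) = complex_of_real ((cmod a)\<^sup>2 * (norm x)\<^sup>2)"
    by (simp only: cinner_self_norm complex_norm_square[symmetric] of_real_mult)
  hence "(norm (a *\<^sub>C x))\<^sup>2 = (cmod a * norm x)\<^sup>2"
    by (simp only: of_real_eq_iff power_mult_distrib)
  then show ?thesis
    by (simp add: power2_eq_iff_nonneg)
qed

lemma bounded_bilinear_cscale: "bounded_bilinear cscale"
  unfolding bounded_bilinear_def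
  by (auto simp: cscale_add_left cscale_add_right scaleR_cscale_left scaleR_cscale_commute norm_cscale
      intro!: exI[of _ 1])

lemma cinner_norm_plus: "(norm (x + y))\<^sup>2 = (norm x)\<^sup>2 + (norm y)\<^sup>2 + 2 * Re (cinner x y)"
proof -
  have "complex_of_real ((norm (x + y))\<^sup>2) = cinner (x+y) (x+y)" by (simp add: cinner_self_norm)
  also have "\<dots> = cinner x x + cinner y y + (cinner x y + cnj (cinner x y))"
    by (simp add: cinner_add_left cinner_add_right cinner_commute[of y x])
  also have "cinner x y + cnj (cinner x y) = complex_of_real (2 * Re (cinner x y))"
    by (simp add: complex_add_cnj)
  finally have "complex_of_real ((norm (x + y))\<^sup>2) = complex_of_real ((norm x)\<^sup>2 + (norm y)\<^sup>2 + 2 * Re (cinner x y))"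
    by (simp only: cinner_self_norm of_real_add)
  then show ?thesis by (simp only: of_real_eq_iff)
qed

lemma Re_cinner_bound: "\<bar>Re (cinner x y)\<bar> \<le> norm x * norm y"
proof -
  have p: "(norm (x + y))\<^sup>2 = (norm x)\<^sup>2 + (norm y)\<^sup>2 + 2 * Re (cinner x y)"
    by (rule cinner_norm_plus)
  have m: "(norm (x + - y))\<^sup>2 = (norm x)\<^sup>2 + (norm y)\<^sup>2 - 2 * Re (cinner x y)"
    using cinner_norm_plus[of x "-y"] by (simp add: cinner_commute[of x "-y"] cinner_minus_left cinner_commute[of y x])
  have "norm (x + y) \<le> norm x + norm y" by (rule norm_triangle_ineq)
  hence a: "(norm (x + y))\<^sup>2 \<le> (norm x + norm y)\<^sup>2" by (simp add: power_mono)
  have "norm (x + - y) \<le> norm x + norm y" using norm_triangle_ineq[of x "-y"] by simp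
  hence b: "(norm (x + - y))\<^sup>2 \<le> (norm x + norm y)\<^sup>2" by (simp add: power_mono)
  have s: "(norm x + norm y)\<^sup>2 = (norm x)\<^sup>2 + (norm y)\<^sup>2 + 2*(norm x*norm y)"
    by (simp add: power2_sum)
  show ?thesis unfolding abs_le_iff using a b p m s by linarith
qed

lemma cinner_bound: "cmod (cinner x y) \<le> 2 * (norm x * norm y)"
proof -
  have "Im (cinner x y) = Re (cinner ((-\<i>) *\<^sub>C x) y)"
    by (simp add: cinner_cscale_left)
  hence "\<bar>Im (cinner x y)\<bar> \<le> norm x * norm y"
    using Re_cinner_bound[of "(-\<i>) *\<^sub>C x" y] by (simp add: norm_cscale)
  moreover have "\<bar>Re (cinner x y)\<bar> \<le> norm x * norm y" by (rule Re_cinner_bound)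
  ultimately show ?thesis using cmod_le[of "cinner x y"] by linarith
qed

lemma bounded_linear_cinner_left: "bounded_linear (\<lambda>x. cinner x y)"
proof
  show "cinner (a + b) y = cinner a y + cinner b y" for a b by (rule cinner_add_left)
  show "cinner (r *\<^sub>R a) y = r *\<^sub>R cinner a y" for r a by (simp add: cinner_scaleR_left scaleR_conv_of_real)
  show "\<exists>K. \<forall>x. norm (cinner x y) \<le> norm x * K"
    by (rule exI[of _ "2 * norm y"]) (use cinner_bound in \<open>auto simp: mult_ac\<close>)
qed

lemma RD_zero:
  fixes g :: "real \<Rightarrow> 'b::real_normed_vector"
  assumes cont: "continuous_on {0..} g" and g0: "g 0 = 0"
    and rd: "\<And>t. t \<ge> 0 \<Longrightarrow> ((\<lambda>h. (1/h) *\<^sub>R (g (t+h) - g t)) \<longlongrightarrow> 0) (at_right 0)"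
    and T: "T \<ge> 0"
  shows "g T = 0"
proof -
  have key: "norm (g T) \<le> e * T" if e: "e > 0" for e
  proof (rule ccontr)
    assume neg: "\<not> norm (g T) \<le> e * T"
    define \<phi> where "\<phi> t = norm (g t) - e * t" for t
    have cphi: "continuous_on {0..T} \<phi>"
      unfolding \<phi>_def
      by (intro continuous_intros continuous_on_subset[OF cont]) auto
    define S where "S = {0..T} \<inter> \<phi> -` {..0}"
    have cS: "closed S" unfolding S_def
      by (rule continuous_closed_preimage[OF cphi]) auto
    have 0: "0 \<in> S" using T g0 by (simp add: S_def \<phi>_def)
    have bS: "bdd_above S" unfolding S_def by (rule bdd_aboveI[of _ T]) auto
    define s where "s = Sup S"
    have sS: "s \<in> S" unfolding s_def using closed_contains_Sup[OF _ bS cS] 0 by blast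
    hence s0: "0 \<le> s" "s \<le> T" "\<phi> s \<le> 0" by (auto simp: S_def)
    have "s \<noteq> T" using sS neg by (auto simp: S_def \<phi>_def)
    with s0 have sT: "s < T" by simp
    have "\<forall>\<^sub>F h in at_right 0. dist ((1/h) *\<^sub>R (g (s+h) - g s)) 0 < e/2"
      using rd[OF s0(1)] e by (intro tendstoD) auto
    then obtain b where b: "b > 0" and hb: "\<And>h. h > 0 \<Longrightarrow> h < b \<Longrightarrow> dist ((1/h) *\<^sub>R (g (s+h) - g s)) 0 < e/2"
      by (auto simp: eventually_at_right_field)
    define h where "h = min b (T - s) / 2"
    have h0: "h > 0" "h < b" "s + h \<le> T" using b sT unfolding h_def min_def by (auto simp: field_simps)
    have "norm ((1/h) *\<^sub>R (g (s+h) - g s)) < e/2" using hb[OF h0(1,2)] by (simp only: dist_norm diff_zero)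
    moreover have ih: "\<bar>1/h\<bar> = 1/h" using h0(1) by simp
    ultimately have "(1/h) * norm (g (s+h) - g s) < e/2" by (simp only: norm_scaleR)
    hence "norm (g (s+h) - g s) < (e * h) / 2" using h0(1) by (simp add: field_simps)
    hence "norm (g (s+h)) < norm (g s) + (e * h) / 2" using norm_triangle_ineq2[of "g (s+h)" "g s"] by linarith
    moreover have "e * h > 0" using e h0(1) by simp
    moreover have "norm (g s) \<le> e * s" using s0(3) unfolding \<phi>_def by simp
    ultimately have "norm (g (s+h)) \<le> e * s + e * h" by linarith
    hence "\<phi> (s+h) \<le> 0" unfolding \<phi>_def by (simp add: distrib_left)
    hence "s + h \<in> S" using h0 s0 by (auto simp: S_def)
    hence "s + h \<le> s" unfolding s_def by (rule cSup_upper[OF _ bS])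
    thus False using h0 by simp
  qed
  show ?thesis
  proof (cases "T = 0")
    case True thus ?thesis using g0 by simp
  next
    case False
    hence Tp: "T > 0" using T by simp
    show ?thesis
    proof (rule ccontr)
      assume "g T \<noteq> 0"
      hence np: "norm (g T) > 0" by simp
      have "norm (g T) \<le> (norm (g T) / (2*T)) * T"
        by (rule key) (use np Tp in simp)
      thus False using np Tp by simp
    qed
  qed
qed

lemma vd_right_quotient:
  fixes f :: "real \<Rightarrow> 'b::real_normed_vector"
  assumes d: "(f has_vector_derivative f') (at t within {0..})" and t: "t \<ge> 0"
  shows "((\<lambda>h. (1/h) *\<^sub>R (f (t+h) - f t)) \<longlongrightarrow> f') (at_right 0)"
proof -
  have "((\<lambda>y. (1 / norm(y - t)) *\<^sub>R (f y - (f t + (y - t) *\<^sub>R f'))) \<longlongrightarrow> 0) (at t within {0..})"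
    using d unfolding has_vector_derivative_def has_derivative_within by blast
  hence "((\<lambda>y. (1 / norm(y - t)) *\<^sub>R (f y - (f t + (y - t) *\<^sub>R f'))) \<longlongrightarrow> 0) (at_right t)"
    by (rule tendsto_mono[rotated]) (rule at_le, use t in auto)
  hence "((\<lambda>h. (1 / norm(h + t - t)) *\<^sub>R (f (h + t) - (f t + (h + t - t) *\<^sub>R f'))) \<longlongrightarrow> 0) (at_right 0)"
    by (simp add: at_right_to_0[of t] filterlim_filtermap)
  hence lim: "((\<lambda>h. (1/h) *\<^sub>R (f (t+h) - f t) - f') \<longlongrightarrow> 0) (at_right 0)"
  proof (rule tendsto_cong[THEN iffD1, rotated])
    show "\<forall>\<^sub>F h in at_right 0. (1 / norm(h + t - t)) *\<^sub>R (f (h + t) - (f t + (h + t - t) *\<^sub>R f')) = (1/h) *\<^sub>R (f (t+h) - f t) - f'"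
      unfolding eventually_at_right_field
      by (rule exI[of _ 1]) (auto simp: algebra_simps)
  qed
  have "((\<lambda>h. ((1/h) *\<^sub>R (f (t+h) - f t) - f') + f') \<longlongrightarrow> 0 + f') (at_right 0)"
    by (intro tendsto_add lim tendsto_const)
  thus ?thesis by simp
qed

context
  fixes U :: "real \<Rightarrow> 'a::complex_hilbert \<Rightarrow> 'a"
  assumes sg: "C0_semigroup U"
begin

lemma sg_bl: "t \<ge> 0 \<Longrightarrow> bounded_linear (U t)"
  using sg by (simp add: C0_semigroup_def)

lemma sg_c: "t \<ge> 0 \<Longrightarrow> U t (c *\<^sub>C x) = c *\<^sub>C U t x"
  using sg by (simp add: C0_semigroup_def)

lemma sg_0: "U 0 x = x"
  using sg by (simp add: C0_semigroup_def)

lemma sg_add: "s \<ge> 0 \<Longrightarrow> t \<ge> 0 \<Longrightarrow> U (s + t) x = U s (U t x)"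
  using sg by (simp add: C0_semigroup_def)

lemma sg_cont: "continuous_on {0..} (\<lambda>t. U t x)"
  using sg by (simp add: C0_semigroup_def)

lemma sg_right_quot:
  assumes z: "z \<in> gen_dom U" and t: "t \<ge> 0"
  shows "((\<lambda>h. (1/h) *\<^sub>R (U (t+h) z - U t z)) \<longlongrightarrow> U t (gen U z)) (at_right 0)"
proof -
  obtain y where y: "((\<lambda>h. (1 / h) *\<^sub>R (U h z - z)) \<longlongrightarrow> y) (at_right 0)"
    using z by (auto simp: gen_dom_def)
  have "gen U z = y" unfolding gen_def using y by (intro tendsto_Lim) auto
  with y have lim0: "((\<lambda>h. (1 / h) *\<^sub>R (U h z - z)) \<longlongrightarrow> gen U z) (at_right 0)" by simp
  interpret bl: bounded_linear "U t" by (rule sg_bl[OF t])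
  have "((\<lambda>h. U t ((1 / h) *\<^sub>R (U h z - z))) \<longlongrightarrow> U t (gen U z)) (at_right 0)"
    by (rule bl.tendsto[OF lim0])
  moreover have "\<forall>\<^sub>F h in at_right 0. U t ((1 / h) *\<^sub>R (U h z - z)) = (1/h) *\<^sub>R (U (t+h) z - U t z)"
    unfolding eventually_at_right_field
    by (rule exI[of _ 1]) (auto simp: sg_add t bl.scaleR bl.diff)
  ultimately show ?thesis by (rule tendsto_cong[THEN iffD1, rotated])
qed

lemma sg_deriv:
  assumes z: "z \<in> gen_dom U" and t: "t \<ge> 0"
  shows "((\<lambda>s. U s z) has_vector_derivative U t (gen U z)) (at t within {0..})"
proof -
  define L where "L = gen U z"
  define G where "G t = z + integral {0..t} (\<lambda>s. U s L)" for t
  have cF: "continuous_on {0..} (\<lambda>s. U s L)" by (rule sg_cont)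
  have dG: "(G has_vector_derivative U x L) (at x within {0..})" if x: "x \<ge> 0" for x
  proof -
    have "((\<lambda>u. integral {0..u} (\<lambda>s. U s L)) has_vector_derivative U x L) (at x within {0..x+1})"
      by (rule integral_has_vector_derivative) (use x in \<open>auto intro: continuous_on_subset[OF cF]\<close>)
    moreover have "at x within {0..x+1} = at x within {0..}"
      by (rule at_within_nhd[of _ "{..<x+1}"]) auto
    ultimately have "((\<lambda>u. integral {0..u} (\<lambda>s. U s L)) has_vector_derivative U x L) (at x within {0..})"
      by simp
    hence "((\<lambda>u. z + integral {0..u} (\<lambda>s. U s L)) has_vector_derivative 0 + U x L) (at x within {0..})"
      by (intro has_vector_derivative_add has_vector_derivative_const)
    thus ?thesis by (simp add: G_def[abs_def])
  qed
  define g where "g t = U t z - G t" for t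
  have cG: "continuous_on {0..} G"
    unfolding continuous_on_eq_continuous_within using dG by (auto intro: has_vector_derivative_continuous)
  have "g x = 0" if x: "x \<ge> 0" for x
  proof (rule RD_zero[of g])
    show "continuous_on {0..} g" unfolding g_def by (intro continuous_intros sg_cont cG)
    show "g 0 = 0" by (simp add: g_def G_def sg_0)
    show "((\<lambda>h. (1/h) *\<^sub>R (g (t+h) - g t)) \<longlongrightarrow> 0) (at_right 0)" if t: "t \<ge> 0" for t
    proof -
      have "((\<lambda>h. (1/h) *\<^sub>R (U (t+h) z - U t z) - (1/h) *\<^sub>R (G (t+h) - G t)) \<longlongrightarrow> U t L - U t L) (at_right 0)"
        by (intro tendsto_diff sg_right_quot[OF z t, folded L_def] vd_right_quotient[OF dG t] t)
      thus ?thesis by (simp add: g_def algebra_simps)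
    qed
  qed (rule x)
  hence eq: "\<And>x. x \<in> {0..} \<Longrightarrow> U x z = G x" by (auto simp: g_def)
  have tin: "t \<in> {0..}" using t by simp
  show ?thesis unfolding L_def[symmetric]
    by (rule has_vector_derivative_transform[where g="\<lambda>s. U s z", OF tin eq dG[OF t]])
qed

end

section \<open>Reflection on [0,t]\<close>

lemma has_integral_reflect_t:
  fixes f :: "real \<Rightarrow> 'b::real_normed_vector"
  assumes "(f has_integral i) {0..t}"
  shows "((\<lambda>s. f (t - s)) has_integral i) {0..t}"
proof -
  have "(f has_integral i) (cbox 0 t)" using assms by simp
  from has_integral_affinity[OF this, of "-1" t]
  have *: "((\<lambda>x. f ((-1) *\<^sub>R x + t)) has_integral i) ((\<lambda>x. (1 / -1) *\<^sub>R x + - ((1 / -1) *\<^sub>R t)) ` cbox 0 t)"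
    by simp
  have img: "(\<lambda>x. (1 / -1) *\<^sub>R x + - ((1 / -1) *\<^sub>R t)) ` cbox 0 t = {0..t}"
  proof
    show "(\<lambda>x. (1 / -1) *\<^sub>R x + - ((1 / -1) *\<^sub>R t)) ` cbox 0 t \<subseteq> {0..t}" by auto
    show "{0..t} \<subseteq> (\<lambda>x. (1 / -1) *\<^sub>R x + - ((1 / -1) *\<^sub>R t)) ` cbox 0 t"
    proof
      fix y :: real assume "y \<in> {0..t}"
      thus "y \<in> (\<lambda>x. (1 / -1) *\<^sub>R x + - ((1 / -1) *\<^sub>R t)) ` cbox 0 t"
        by (intro image_eqI[of _ _ "t - y"]) auto
    qed
  qed
  show ?thesis using * unfolding img by simp
qed

lemma integrable_reflect_t:
  fixes f :: "real \<Rightarrow> 'b::real_normed_vector"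
  shows "(\<lambda>s. f (t - s)) integrable_on {0..t} \<longleftrightarrow> f integrable_on {0..t}"
proof
  assume "(\<lambda>s. f (t - s)) integrable_on {0..t}"
  then obtain i where "((\<lambda>s. f (t - s)) has_integral i) {0..t}" by blast
  from has_integral_reflect_t[OF this] show "f integrable_on {0..t}" by auto
next
  assume "f integrable_on {0..t}"
  then obtain i where "(f has_integral i) {0..t}" by blast
  from has_integral_reflect_t[OF this] show "(\<lambda>s. f (t - s)) integrable_on {0..t}" by auto
qed

lemma integral_reflect_t:
  fixes f :: "real \<Rightarrow> 'b::real_normed_vector"
  shows "integral {0..t} (\<lambda>s. f (t - s)) = integral {0..t} f"
proof (cases "f integrable_on {0..t}")
  case True
  then show ?thesis using has_integral_reflect_t[OF integrable_integral[OF True]]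
    by (simp add: integral_unique)
next
  case False
  then have "\<not> (\<lambda>s. f (t - s)) integrable_on {0..t}" by (simp add: integrable_reflect_t)
  with False show ?thesis by (simp add: not_integrable_integral)
qed

lemma abs_integrable_reflect_t:
  fixes f :: "real \<Rightarrow> complex"
  assumes "f absolutely_integrable_on {0..t}"
  shows "(\<lambda>s. f (t - s)) absolutely_integrable_on {0..t}"
  using assms unfolding absolutely_integrable_on_def
  by (simp add: integrable_reflect_t[of f t] integrable_reflect_t[of "\<lambda>x. norm (f x)" t])

section \<open>Integrability of bilinear products\<close>

lemma operative_approximable_weighted:
  fixes f :: "'b::euclidean_space \<Rightarrow> 'a::banach"
  assumes "0 \<le> e" and w: "\<And>x. 0 \<le> w x"
  shows "operative conj True (\<lambda>i. \<exists>g. (\<forall>x\<in>i. norm (f x - g (x::'b)) \<le> e * w x) \<and> g integrable_on i)"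
proof -
  interpret comm_monoid conj True
    by standard auto
  show ?thesis
  proof (standard, safe)
    fix a b :: 'b
    show "\<exists>g. (\<forall>x\<in>cbox a b. norm (f x - g x) \<le> e * w x) \<and> g integrable_on cbox a b"
      if "box a b = {}" for a b
      using assms that
      by (metis content_eq_0_interior integrable_on_null interior_cbox norm_zero right_minus_eq zero_le_mult_iff)
    {
      fix c g and k :: 'b
      assume fg: "\<forall>x\<in>cbox a b. norm (f x - g x) \<le> e * w x" and g: "g integrable_on cbox a b"
      assume k: "k \<in> Basis"
      show "\<exists>g. (\<forall>x\<in>cbox a b \<inter> {x. x \<bullet> k \<le> c}. norm (f x - g x) \<le> e * w x) \<and> g integrable_on cbox a b \<inter> {x. x \<bullet> k \<le> c}"
           "\<exists>g. (\<forall>x\<in>cbox a b \<inter> {x. c \<le> x \<bullet> k}. norm (f x - g x) \<le> e * w x) \<and> g integrable_on cbox a b \<inter> {x. c \<le> x \<bullet> k}"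
        using fg g k by auto
    }
    show "\<exists>g. (\<forall>x\<in>cbox a b. norm (f x - g x) \<le> e * w x) \<and> g integrable_on cbox a b"
      if fg1: "\<forall>x\<in>cbox a b \<inter> {x. x \<bullet> k \<le> c}. norm (f x - g1 x) \<le> e * w x" 
        and g1: "g1 integrable_on cbox a b \<inter> {x. x \<bullet> k \<le> c}"
        and fg2: "\<forall>x\<in>cbox a b \<inter> {x. c \<le> x \<bullet> k}. norm (f x - g2 x) \<le> e * w x" 
        and g2: "g2 integrable_on cbox a b \<inter> {x. c \<le> x \<bullet> k}" 
        and k: "k \<in> Basis"
      for c k g1 g2
    proof -
      let ?g = "\<lambda>x. if x\<bullet>k = c then f x else if x\<bullet>k \<le> c then g1 x else g2 x"
      show "\<exists>g. (\<forall>x\<in>cbox a b. norm (f x - g x) \<le> e * w x) \<and> g integrable_on cbox a b"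
      proof (intro exI conjI ballI)
        show "norm (f x - ?g x) \<le> e * w x" if "x \<in> cbox a b" for x
          using that assms fg1 fg2 by auto
        show "?g integrable_on cbox a b"
        proof -
          have "?g integrable_on cbox a b \<inter> {x. x \<bullet> k \<le> c}" "?g integrable_on cbox a b \<inter> {x. x \<bullet> k \<ge> c}"
            by(rule integrable_spike[OF _ negligible_standard_hyperplane[of k c]], use k g1 g2 in auto)+
          with has_integral_split[OF _ _ k] show ?thesis
            unfolding integrable_on_def by blast
        qed
      qed
    qed
  qed
qed

lemma approximable_weighted_on_division:
  fixes f :: "'b::euclidean_space \<Rightarrow> 'a::banach"
  assumes "0 \<le> e" and w: "\<And>x. 0 \<le> w x"
    and d: "d division_of (cbox a b)"
    and f: "\<forall>i\<in>d. \<exists>g. (\<forall>x\<in>i. norm (f x - g x) \<le> e * w x) \<and> g integrable_on i"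
  obtains g where "\<forall>x\<in>cbox a b. norm (f x - g x) \<le> e * w x" "g integrable_on cbox a b"
proof -
  interpret operative conj True "\<lambda>i. \<exists>g. (\<forall>x\<in>i. norm (f x - g (x::'b)) \<le> e * w x) \<and> g integrable_on i"
    using \<open>0 \<le> e\<close> w by (rule operative_approximable_weighted)
  from f local.division [OF d] that show thesis
    by auto
qed

lemma integrable_weighted_limit:
  fixes F :: "real \<Rightarrow> 'd::banach" and w :: "real \<Rightarrow> real"
  assumes w: "w integrable_on cbox a b"
    and approx: "\<And>e. e > 0 \<Longrightarrow> \<exists>G. (\<forall>x\<in>cbox a b. norm (F x - G x) \<le> e * w x) \<and> G integrable_on cbox a b"
  shows "F integrable_on cbox a b"
  unfolding integrable_Cauchy
proof (intro allI impI)
  fix \<epsilon> :: real assume \<epsilon>: "\<epsilon> > 0"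
  define I where "I = integral (cbox a b) w"
  have wI: "(w has_integral I) (cbox a b)" unfolding I_def by (rule integrable_integral[OF w])
  define e where "e = \<epsilon> / (4 * (\<bar>I\<bar> + 1))"
  have e: "e > 0" using \<epsilon> by (simp add: e_def)
  obtain G where G: "\<And>x. x \<in> cbox a b \<Longrightarrow> norm (F x - G x) \<le> e * w x" and Gi: "G integrable_on cbox a b"
    using approx[OF e] by blast
  obtain \<gamma>1 where g1: "gauge \<gamma>1" and c1: "\<And>D1 D2. D1 tagged_division_of (cbox a b) \<Longrightarrow> \<gamma>1 fine D1 \<Longrightarrow>
      D2 tagged_division_of (cbox a b) \<Longrightarrow> \<gamma>1 fine D2 \<Longrightarrow>
      norm ((\<Sum>(x,K)\<in>D1. Henstock_Kurzweil_Integration.content K *\<^sub>R G x) - (\<Sum>(x,K)\<in>D2. Henstock_Kurzweil_Integration.content K *\<^sub>R G x)) < \<epsilon>/2"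
    using Gi[unfolded integrable_Cauchy, rule_format, of "\<epsilon>/2"] \<epsilon> by auto
  obtain \<gamma>2 where g2: "gauge \<gamma>2" and c2: "\<And>D. D tagged_division_of (cbox a b) \<Longrightarrow> \<gamma>2 fine D \<Longrightarrow>
      norm ((\<Sum>(x,K)\<in>D. Henstock_Kurzweil_Integration.content K *\<^sub>R w x) - I) < 1"
    using wI[unfolded has_integral, rule_format, of 1] by auto
  have bnd: "norm ((\<Sum>(x,K)\<in>D. Henstock_Kurzweil_Integration.content K *\<^sub>R F x) - (\<Sum>(x,K)\<in>D. Henstock_Kurzweil_Integration.content K *\<^sub>R G x)) \<le> \<epsilon>/4"
    if D: "D tagged_division_of (cbox a b)" and fD: "\<gamma>2 fine D" for D
  proof -
    have fin: "finite D" using D by blast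
    have "norm ((\<Sum>(x,K)\<in>D. Henstock_Kurzweil_Integration.content K *\<^sub>R F x) - (\<Sum>(x,K)\<in>D. Henstock_Kurzweil_Integration.content K *\<^sub>R G x))
        = norm (\<Sum>(x,K)\<in>D. Henstock_Kurzweil_Integration.content K *\<^sub>R (F x - G x))"
      by (simp add: sum_subtractf[symmetric] case_prod_unfold scaleR_diff_right)
    also have "\<dots> \<le> (\<Sum>(x,K)\<in>D. norm (Henstock_Kurzweil_Integration.content K *\<^sub>R (F x - G x)))"
      by (simp only: case_prod_unfold norm_sum)
    also have "\<dots> \<le> (\<Sum>(x,K)\<in>D. e * (Henstock_Kurzweil_Integration.content K *\<^sub>R w x))"
    proof (rule sum_mono, clarify)
      fix x K assume xK: "(x, K) \<in> D"
      hence "x \<in> cbox a b" using D by blast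
      hence "norm (F x - G x) \<le> e * w x" by (rule G)
      hence "Henstock_Kurzweil_Integration.content K * norm (F x - G x) \<le> Henstock_Kurzweil_Integration.content K * (e * w x)"
        by (rule mult_left_mono) simp
      thus "norm (Henstock_Kurzweil_Integration.content K *\<^sub>R (F x - G x)) \<le> e * (Henstock_Kurzweil_Integration.content K *\<^sub>R w x)"
        by (simp add: mult_ac)
    qed
    also have "\<dots> = e * (\<Sum>(x,K)\<in>D. Henstock_Kurzweil_Integration.content K *\<^sub>R w x)"
      by (simp add: sum_distrib_left case_prod_unfold)
    also have "\<dots> \<le> e * (\<bar>I\<bar> + 1)"
    proof (rule mult_left_mono)
      show "(\<Sum>(x,K)\<in>D. Henstock_Kurzweil_Integration.content K *\<^sub>R w x) \<le> \<bar>I\<bar> + 1"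
        using c2[OF D fD] by (simp add: abs_le_iff) 
    qed (use e in simp)
    also have "\<dots> = \<epsilon>/4" unfolding e_def by (simp add: field_simps)
    finally show ?thesis .
  qed
  show "\<exists>\<gamma>. gauge \<gamma> \<and>
          (\<forall>\<D>1 \<D>2. \<D>1 tagged_division_of (cbox a b) \<and> \<gamma> fine \<D>1 \<and>
            \<D>2 tagged_division_of (cbox a b) \<and> \<gamma> fine \<D>2 \<longrightarrow>
            norm ((\<Sum>(x,K)\<in>\<D>1. Henstock_Kurzweil_Integration.content K *\<^sub>R F x) - (\<Sum>(x,K)\<in>\<D>2. Henstock_Kurzweil_Integration.content K *\<^sub>R F x)) < \<epsilon>)"
  proof (intro exI conjI allI impI)
    show "gauge (\<lambda>x. \<gamma>1 x \<inter> \<gamma>2 x)" using g1 g2 by blast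
    fix D1 D2
    assume H: "D1 tagged_division_of cbox a b \<and> (\<lambda>x. \<gamma>1 x \<inter> \<gamma>2 x) fine D1 \<and>
           D2 tagged_division_of cbox a b \<and> (\<lambda>x. \<gamma>1 x \<inter> \<gamma>2 x) fine D2"
    hence D1: "D1 tagged_division_of cbox a b" "\<gamma>1 fine D1" "\<gamma>2 fine D1"
      and D2: "D2 tagged_division_of cbox a b" "\<gamma>1 fine D2" "\<gamma>2 fine D2"
      by (auto simp: fine_Int)
    define SF1 where "SF1 = (\<Sum>(x,K)\<in>D1. Henstock_Kurzweil_Integration.content K *\<^sub>R F x)"
    define SF2 where "SF2 = (\<Sum>(x,K)\<in>D2. Henstock_Kurzweil_Integration.content K *\<^sub>R F x)"
    define SG1 where "SG1 = (\<Sum>(x,K)\<in>D1. Henstock_Kurzweil_Integration.content K *\<^sub>R G x)"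
    define SG2 where "SG2 = (\<Sum>(x,K)\<in>D2. Henstock_Kurzweil_Integration.content K *\<^sub>R G x)"
    have a1: "norm (SF1 - SG1) \<le> \<epsilon>/4" unfolding SF1_def SG1_def by (rule bnd[OF D1(1,3)])
    have a2: "norm (SF2 - SG2) \<le> \<epsilon>/4" unfolding SF2_def SG2_def by (rule bnd[OF D2(1,3)])
    have a3: "norm (SG1 - SG2) < \<epsilon>/2" unfolding SG1_def SG2_def by (rule c1[OF D1(1,2) D2(1,2)])
    have eq: "SF1 - SF2 = (SF1 - SG1) - (SF2 - SG2) + (SG1 - SG2)" by (simp add: algebra_simps)
    have e1: "norm (SF1 - SF2) \<le> norm ((SF1 - SG1) - (SF2 - SG2)) + norm (SG1 - SG2)"
      unfolding eq by (rule norm_triangle_ineq)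
    have e2: "norm ((SF1 - SG1) - (SF2 - SG2)) \<le> norm (SF1 - SG1) + norm (SF2 - SG2)"
      by (rule norm_triangle_ineq4)
    from e1 e2 a1 a2 a3 have "norm (SF1 - SF2) < \<epsilon>" by linarith
    thus "norm ((\<Sum>(x,K)\<in>D1. Henstock_Kurzweil_Integration.content K *\<^sub>R F x) - (\<Sum>(x,K)\<in>D2. Henstock_Kurzweil_Integration.content K *\<^sub>R F x)) < \<epsilon>"
      by (simp add: SF1_def SF2_def)
  qed
qed

lemma integrable_bilinear_continuous:
  fixes f :: "real \<Rightarrow> 'b::euclidean_space" and h :: "real \<Rightarrow> 'c::real_normed_vector"
    and prod :: "'b \<Rightarrow> 'c \<Rightarrow> 'd::banach"
  assumes bb: "bounded_bilinear prod"
    and f: "f absolutely_integrable_on {a..b}" and h: "continuous_on {a..b} h"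
  shows "(\<lambda>x. prod (f x) (h x)) integrable_on {a..b}"
proof -
  interpret bb: bounded_bilinear prod by (rule bb)
  obtain Kb where Kb: "Kb > 0" and bnd: "\<And>u v. norm (prod u v) \<le> norm u * norm v * Kb"
    using bb.pos_bounded by blast
  have fi: "f integrable_on cbox a b" and nfi: "(\<lambda>x. norm (f x)) integrable_on cbox a b"
    using f by (auto simp: absolutely_integrable_on_def)
  have hc: "continuous_on (cbox a b) h" using h by simp
  show ?thesis unfolding box_real(2)[symmetric]
  proof (rule integrable_weighted_limit[OF nfi])
    fix e :: real assume e: "e > 0"
    then obtain d where "0 < d" and d: "\<And>x x'. \<lbrakk>x \<in> cbox a b; x' \<in> cbox a b; dist x' x < d\<rbrakk> \<Longrightarrow> dist (h x') (h x) < e / Kb"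
      using compact_uniformly_continuous[OF hc compact_cbox] Kb unfolding uniformly_continuous_on_def
      by (metis divide_pos_pos)
    obtain p where ptag: "p tagged_division_of cbox a b" and finep: "(\<lambda>x. ball x d) fine p"
      using fine_division_exists[OF gauge_ball[OF \<open>0 < d\<close>], of a b] .
    have *: "\<forall>i\<in>snd ` p. \<exists>g. (\<forall>x\<in>i. norm (prod (f x) (h x) - g x) \<le> e * norm (f x)) \<and> g integrable_on i"
    proof clarsimp 
      fix x l
      assume as: "(x, l) \<in> p"
      obtain c1 d1 where l: "l = cbox c1 d1"
        using as ptag by blast
      have lsub: "l \<subseteq> cbox a b" using as ptag by blast
      have xl: "x \<in> l" using as ptag by blast
      show "\<exists>g. (\<forall>y\<in>l. norm (prod (f y) (h y) - g y) \<le> e * norm (f y)) \<and> g integrable_on l"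
      proof (intro exI conjI strip)
        have "f integrable_on l" using integrable_on_subcbox[OF fi] lsub l by simp
        from integrable_linear[OF this bb.bounded_linear_left[of "h x"]]
        show "(\<lambda>y. prod (f y) (h x)) integrable_on l" by (simp add: o_def)
      next
        fix y
        assume y: "y \<in> l"
        then have "y \<in> ball x d"
          using as finep by fastforce
        then have "dist (h y) (h x) < e / Kb"
          using d xl y lsub by (metis dist_commute mem_ball subsetD)
        hence "norm (h y - h x) * Kb \<le> e" using Kb by (simp add: dist_norm field_simps)
        have "norm (prod (f y) (h y) - prod (f y) (h x)) = norm (prod (f y) (h y - h x))"
          by (simp add: bb.diff_right)
        also have "\<dots> \<le> norm (f y) * norm (h y - h x) * Kb" by (rule bnd)
        also have "\<dots> \<le> norm (f y) * e"
          using \<open>norm (h y - h x) * Kb \<le> e\<close> by (simp add: mult.assoc mult_left_mono)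
        finally show "norm (prod (f y) (h y) - prod (f y) (h x)) \<le> e * norm (f y)" by (simp add: mult.commute)
      qed
    qed
    from e have "e \<ge> 0" by auto
    from approximable_weighted_on_division[OF this _ division_of_tagged_division[OF ptag] *]
    show "\<exists>G. (\<forall>x\<in>cbox a b. norm (prod (f x) (h x) - G x) \<le> e * norm (f x)) \<and> G integrable_on cbox a b"
      by (metis norm_ge_zero)
  qed
qed

lemma poly_integral_t:
  assumes t: "t \<ge> 0"
  shows "((\<lambda>s. (t - s) ^ n) has_integral t ^ Suc n / real (Suc n)) {0..t}"
proof -
  define F where "F s = - ((t - s) ^ Suc n) / real (Suc n)" for s :: real
  have "((\<lambda>s. (t - s) ^ n) has_integral (F t - F 0)) {0..t}"
  proof (rule fundamental_theorem_of_calculus[OF t])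
    fix x assume "x \<in> {0..t}"
    have "(F has_real_derivative (t - x) ^ n) (at x within {0..t})"
      unfolding F_def[abs_def]
      by (rule derivative_eq_intros refl | simp)+
    thus "(F has_vector_derivative (t - x) ^ n) (at x within {0..t})"
      by (simp add: has_real_derivative_iff_has_vector_derivative)
  qed
  thus ?thesis by (simp add: F_def)
qed

definition conv :: "(real \<Rightarrow> complex) \<Rightarrow> (real \<Rightarrow> complex) \<Rightarrow> real \<Rightarrow> complex" where
  "conv k f t = integral {0..t} (\<lambda>s. f (t - s) * k s)"

lemma continuous_on_local_Icc:
  fixes f :: "real \<Rightarrow> 'b::topological_space"
  assumes "\<And>T. T \<ge> 0 \<Longrightarrow> continuous_on {0..T} f"
  shows "continuous_on {0..} f"
  unfolding continuous_on_eq_continuous_within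
proof
  fix x :: real assume x: "x \<in> {0..}"
  have "continuous (at x within {0..x+1}) f"
    using assms[of "x+1"] x by (simp add: continuous_on_eq_continuous_within)
  moreover have "at x within {0..x+1} = at x within {0..}"
    by (rule at_within_nhd[of _ "{..<x+1}"]) auto
  ultimately show "continuous (at x within {0..}) f" by simp
qed

lemma cont_bound_Icc:
  fixes k :: "real \<Rightarrow> 'b::real_normed_vector"
  assumes "continuous_on {0..} k"
  shows "\<exists>M\<ge>0. \<forall>s\<in>{0..T}. norm (k s) \<le> M"
proof -
  have "compact (k ` {0..T})"
    by (rule compact_continuous_image[OF continuous_on_subset[OF assms] compact_Icc]) auto
  then obtain M where "M > 0" "\<forall>y\<in>k ` {0..T}. norm y \<le> M"
    using compact_imp_bounded bounded_pos by metis
  thus ?thesis by (intro exI[of _ M]) auto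
qed

lemma norm_suminf_bound:
  fixes f :: "nat \<Rightarrow> 'b::banach"
  assumes "\<And>n. norm (f n) \<le> a n" "summable a"
  shows "norm (suminf f) \<le> suminf a"
proof -
  have s: "summable (\<lambda>n. norm (f n))"
    by (rule summable_comparison_test[OF _ assms(2)]) (use assms(1) in simp)
  have "norm (suminf f) \<le> (\<Sum>n. norm (f n))" by (rule summable_norm[OF s])
  also have "\<dots> \<le> suminf a" by (rule suminf_le[OF assms(1) s assms(2)])
  finally show ?thesis .
qed

lemma iter_bound:
  fixes E :: "nat \<Rightarrow> real \<Rightarrow> complex"
  assumes T: "T \<ge> 0" and M: "M \<ge> 0" and C: "C \<ge> 0"
    and E0: "\<And>t. t \<in> {0..T} \<Longrightarrow> norm (E 0 t) \<le> C"
    and step: "\<And>n t. t \<in> {0..T} \<Longrightarrow> norm (E (Suc n) t) \<le> M * integral {0..t} (\<lambda>s. norm (E n (t - s)))"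
    and int: "\<And>n t. t \<in> {0..T} \<Longrightarrow> (\<lambda>s. norm (E n (t - s))) integrable_on {0..t}"
  shows "t \<in> {0..T} \<Longrightarrow> norm (E n t) \<le> C * (M * t) ^ n / fact n"
proof (induction n arbitrary: t)
  case 0
  then show ?case using E0 by simp
next
  case (Suc n)
  have t: "0 \<le> t" "t \<le> T" using Suc.prems by auto
  define c where "c = C * M ^ n / fact n"
  have c: "c \<ge> 0" using C M by (simp add: c_def)
  have pi: "((\<lambda>s. c * (t - s) ^ n) has_integral c * (t ^ Suc n / real (Suc n))) {0..t}"
    by (rule has_integral_mult_right[OF poly_integral_t[OF t(1)]])
  have "integral {0..t} (\<lambda>s. norm (E n (t - s))) \<le> integral {0..t} (\<lambda>s. c * (t - s) ^ n)"
  proof (rule integral_le)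
    show "(\<lambda>s. norm (E n (t - s))) integrable_on {0..t}" by (rule int[OF Suc.prems])
    show "(\<lambda>s. c * (t - s) ^ n) integrable_on {0..t}" using pi by blast
    fix s assume s: "s \<in> {0..t}"
    hence "t - s \<in> {0..T}" using t by auto
    from Suc.IH[OF this] show "norm (E n (t - s)) \<le> c * (t - s) ^ n"
      by (simp add: c_def power_mult_distrib)
  qed
  also have "\<dots> = c * (t ^ Suc n / real (Suc n))" using pi by (rule integral_unique)
  finally have "M * integral {0..t} (\<lambda>s. norm (E n (t - s))) \<le> M * (c * (t ^ Suc n / real (Suc n)))"
    by (rule mult_left_mono[OF _ M])
  also have "\<dots> = C * (M * t) ^ Suc n / fact (Suc n)"
    by (simp add: c_def power_mult_distrib field_simps)
  finally show ?case using step[OF Suc.prems, of n] by linarith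
qed

lemma fact_seq_zero: "(\<lambda>n. C * x ^ n / fact n :: real) \<longlonglongrightarrow> 0"
proof -
  have "(\<lambda>n. inverse (fact n) * x ^ n) \<longlonglongrightarrow> 0"
    by (rule summable_LIMSEQ_zero[OF summable_exp])
  hence "(\<lambda>n. C * (inverse (fact n) * x ^ n)) \<longlonglongrightarrow> C * 0"
    by (intro tendsto_mult tendsto_const)
  thus ?thesis by (simp add: field_simps)
qed

lemma conv_integrable:
  fixes f k :: "real \<Rightarrow> complex"
  assumes f: "f absolutely_integrable_on {0..t}" and k: "continuous_on {0..} k"
  shows "(\<lambda>s. f (t - s) * k s) integrable_on {0..t}"
  by (rule integrable_bilinear_continuous[OF bounded_bilinear_mult abs_integrable_reflect_t[OF f]
        continuous_on_subset[OF k]]) auto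

lemma conv_norm:
  fixes f k :: "real \<Rightarrow> complex"
  assumes f: "f absolutely_integrable_on {0..t}" and k: "continuous_on {0..} k"
    and M: "\<And>s. s \<in> {0..t} \<Longrightarrow> norm (k s) \<le> M"
  shows "norm (conv k f t) \<le> M * integral {0..t} (\<lambda>s. norm (f (t - s)))"
proof -
  have nf: "(\<lambda>s. norm (f (t - s))) integrable_on {0..t}"
    using abs_integrable_reflect_t[OF f] by (simp add: absolutely_integrable_on_def)
  have "norm (conv k f t) \<le> integral {0..t} (\<lambda>s. M * norm (f (t - s)))"
    unfolding conv_def
  proof (rule integral_norm_bound_integral)
    show "(\<lambda>s. f (t - s) * k s) integrable_on {0..t}" by (rule conv_integrable[OF f k])
    show "(\<lambda>s. M * norm (f (t - s))) integrable_on {0..t}" by (rule integrable_on_mult_right[OF nf])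
    fix s assume "s \<in> {0..t}"
    hence "norm (k s) \<le> M" by (rule M)
    hence "norm (f (t - s)) * norm (k s) \<le> norm (f (t - s)) * M" by (rule mult_left_mono) simp
    thus "norm (f (t - s) * k s) \<le> M * norm (f (t - s))"
      by (simp only: norm_mult mult.commute[of M])
  qed
  thus ?thesis by simp
qed

lemma volterra_unique:
  fixes D k :: "real \<Rightarrow> complex"
  assumes k: "continuous_on {0..} k"
    and Dint: "\<And>t. t \<ge> 0 \<Longrightarrow> D absolutely_integrable_on {0..t}"
    and Deq: "\<And>t. t \<ge> 0 \<Longrightarrow> D t = - conv k D t"
    and T: "T \<ge> 0"
  shows "D T = 0"
proof -
  obtain M where M: "M \<ge> 0" "\<And>s. s \<in> {0..T} \<Longrightarrow> norm (k s) \<le> M"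
    using cont_bound_Icc[OF k, of T] by blast
  define B where "B = integral {0..T} (\<lambda>u. norm (D u))"
  have sub: "D absolutely_integrable_on {0..t}" if "t \<in> {0..T}" for t
    using Dint that by auto
  have nrefl: "(\<lambda>s. norm (D (t - s))) integrable_on {0..t}" if "t \<in> {0..T}" for t
    using abs_integrable_reflect_t[OF sub[OF that]] by (simp add: absolutely_integrable_on_def)
  have step: "norm (D t) \<le> M * integral {0..t} (\<lambda>s. norm (D (t - s)))" if t: "t \<in> {0..T}" for t
  proof -
    have "norm (D t) = norm (conv k D t)" using Deq[of t] t by simp
    also have "\<dots> \<le> M * integral {0..t} (\<lambda>s. norm (D (t - s)))"
      by (rule conv_norm[OF sub[OF t] k]) (use M t in auto)
    finally show ?thesis .
  qed
  have B0: "norm (D t) \<le> M * B" if t: "t \<in> {0..T}" for t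
  proof -
    have "integral {0..t} (\<lambda>s. norm (D (t - s))) = integral {0..t} (\<lambda>u. norm (D u))"
      by (rule integral_reflect_t)
    also have "\<dots> \<le> B" unfolding B_def
    proof (rule integral_subset_le)
      show "{0..t} \<subseteq> {0..T}" using t by auto
      show "(\<lambda>u. norm (D u)) integrable_on {0..t}" using sub[OF t] by (simp add: absolutely_integrable_on_def)
      show "(\<lambda>u. norm (D u)) integrable_on {0..T}" using Dint[OF T] by (simp add: absolutely_integrable_on_def)
    qed auto
    finally show ?thesis using step[OF t] M(1) by (meson mult_left_mono order_trans)
  qed
  have B: "B \<ge> 0" unfolding B_def
    by (rule integral_nonneg) (use Dint[OF T] in \<open>auto simp: absolutely_integrable_on_def\<close>)
  have bnd: "norm (D T) \<le> (M * B) * (M * T) ^ n / fact n" for n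
    by (rule iter_bound[where E="\<lambda>_. D", OF T M(1) _ B0 step nrefl]) (use M B T in auto)
  have "norm (D T) \<le> 0"
    by (rule LIMSEQ_le_const[OF fact_seq_zero[of "M * B" "M * T"]]) (use bnd in auto)
  thus ?thesis by simp
qed

lemma has_integral_scale_t:
  fixes F :: "real \<Rightarrow> 'b::real_normed_vector"
  assumes "(F has_integral I) {0..t}" and t: "t > 0"
  shows "((\<lambda>r. F (t * r)) has_integral I /\<^sub>R t) {0..1}"
proof -
  have "(F has_integral I) (cbox 0 t)" using assms by simp
  from has_integral_affinity[OF this, of t 0]
  have *: "((\<lambda>x. F (t *\<^sub>R x + 0)) has_integral (1 / \<bar>t\<bar> ^ DIM(real)) *\<^sub>R I) ((\<lambda>x. (1 / t) *\<^sub>R x + - ((1 / t) *\<^sub>R 0)) ` cbox 0 t)"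
    using t by simp
  have img: "(\<lambda>x. (1 / t) *\<^sub>R x + - ((1 / t) *\<^sub>R 0)) ` cbox 0 t = {0..1::real}"
  proof
    show "(\<lambda>x. (1 / t) *\<^sub>R x + - ((1 / t) *\<^sub>R 0)) ` cbox 0 t \<subseteq> {0..1::real}"
      using t by (auto simp: field_simps)
    show "{0..1} \<subseteq> (\<lambda>x. (1 / t) *\<^sub>R x + - ((1 / t) *\<^sub>R 0)) ` cbox 0 t"
    proof
      fix y :: real assume y: "y \<in> {0..1}"
      have "t * y \<le> t * 1" using y t by (intro mult_left_mono) auto
      thus "y \<in> (\<lambda>x. (1 / t) *\<^sub>R x + - ((1 / t) *\<^sub>R 0)) ` cbox 0 t"
        using y t by (intro image_eqI[of _ _ "t * y"]) auto
    qed
  qed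
  show ?thesis using * t unfolding img by (simp add: divide_inverse_commute)
qed

lemma conv_cont:
  fixes f k :: "real \<Rightarrow> complex"
  assumes f: "continuous_on {0..} f" and k: "continuous_on {0..} k"
  shows "continuous_on {0..} (conv k f)"
proof -
  define J where "J t = integral (cbox 0 1) (\<lambda>r. f (t - t * r) * k (t * r))" for t :: real
  have cp: "continuous_on ({0..} \<times> cbox 0 1) (\<lambda>p::real\<times>real. f (fst p - fst p * snd p) * k (fst p * snd p))"
  proof (intro continuous_on_mult continuous_on_compose2[OF f] continuous_on_compose2[OF k] continuous_intros)
    have le: "a * b \<le> a" if "0 \<le> a" "b \<le> 1" for a b :: real
      using mult_left_mono[of b 1 a] that by simp
    show "(\<lambda>p::real\<times>real. fst p - fst p * snd p) ` ({0..} \<times> cbox 0 1) \<subseteq> {0..}"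
      using le by auto
    show "(\<lambda>p::real\<times>real. fst p * snd p) ` ({0..} \<times> cbox 0 1) \<subseteq> {0..}"
      by auto
  qed
  have cJ: "continuous_on {0..} J"
    unfolding J_def
    by (rule integral_continuous_on_param) (use cp in \<open>simp add: case_prod_unfold\<close>)
  have eq: "conv k f t = t * J t" if t: "t \<in> {0..}" for t
  proof (cases "t = 0")
    case True thus ?thesis by (simp add: conv_def)
  next
    case False
    with t have tp: "t > 0" by simp
    have cF: "continuous_on {0..t} (\<lambda>s. f (t - s) * k s)"
      by (intro continuous_on_mult continuous_on_compose2[OF f] continuous_on_subset[OF k] continuous_intros) auto
    have "((\<lambda>s. f (t - s) * k s) has_integral conv k f t) {0..t}"
      unfolding conv_def by (rule integrable_integral[OF integrable_continuous_interval[OF cF]])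
    from has_integral_scale_t[OF this tp]
    have "((\<lambda>r. f (t - t * r) * k (t * r)) has_integral conv k f t /\<^sub>R t) (cbox 0 1)" by simp
    hence "J t = conv k f t /\<^sub>R t" unfolding J_def by (rule integral_unique)
    moreover have "complex_of_real t * (conv k f t /\<^sub>R t) = t *\<^sub>R (conv k f t /\<^sub>R t)"
      by (simp only: scaleR_conv_of_real)
    moreover have "t *\<^sub>R (conv k f t /\<^sub>R t) = conv k f t" using tp by simp
    ultimately show ?thesis by simp
  qed
  have "continuous_on {0..} (\<lambda>t. t * J t)" by (intro continuous_intros cJ)
  moreover have "\<And>t. t \<in> {0..} \<Longrightarrow> complex_of_real t * J t = conv k f t" using eq by simp
  ultimately show ?thesis using continuous_on_cong[of "{0..}" "{0..}" "\<lambda>t. complex_of_real t * J t" "conv k f"] by blast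
qed

fun picard :: "(real \<Rightarrow> complex) \<Rightarrow> (real \<Rightarrow> complex) \<Rightarrow> nat \<Rightarrow> real \<Rightarrow> complex" where
  "picard k g 0 = g"
| "picard k g (Suc n) = (\<lambda>t. g t - conv k (picard k g n) t)"

lemma conv_diff:
  fixes f1 f2 k :: "real \<Rightarrow> complex"
  assumes "continuous_on {0..} f1" "continuous_on {0..} f2" "continuous_on {0..} k" "t \<ge> 0"
  shows "conv k f1 t - conv k f2 t = conv k (\<lambda>s. f1 s - f2 s) t"
proof -
  have i: "(\<lambda>s. f (t - s) * k s) integrable_on {0..t}" if "continuous_on {0..} f" for f
    by (rule integrable_continuous_interval)
       (intro continuous_on_mult continuous_on_compose2[OF that] continuous_on_subset[OF assms(3)] continuous_intros; auto)
  show ?thesis unfolding conv_def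
    by (simp add: integral_diff[OF i[OF assms(1)] i[OF assms(2)], symmetric] left_diff_distrib)
qed

lemma volterra_exists:
  fixes k g :: "real \<Rightarrow> complex"
  assumes k: "continuous_on {0..} k" and g: "continuous_on {0..} g"
  shows "\<exists>K. continuous_on {0..} K \<and> (\<forall>t\<ge>0. K t = g t - conv k K t)"
proof -
  define P where "P = picard k g"
  have cP: "continuous_on {0..} (P n)" for n
    by (induction n) (auto simp: P_def intro!: continuous_intros g conv_cont k)
  define E where "E n t = P (Suc n) t - P n t" for n t
  have cE: "continuous_on {0..} (E n)" for n
    unfolding E_def by (intro continuous_intros cP)
  have Estep: "E (Suc n) t = - conv k (E n) t" if "t \<ge> 0" for n t
  proof -
    have "E (Suc n) t = - (conv k (P (Suc n)) t - conv k (P n) t)"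
      by (simp add: E_def P_def)
    also have "\<dots> = - conv k (E n) t"
      unfolding E_def[abs_def] by (subst conv_diff[OF cP cP k that]) simp
    finally show ?thesis .
  qed
  have Eai: "E n absolutely_integrable_on {0..t}" for n t
    by (rule absolutely_integrable_continuous_real[OF continuous_on_subset[OF cE]]) auto
  have unif: "\<exists>a. summable a \<and> (\<forall>n. \<forall>t\<in>{0..T}. norm (E n t) \<le> a n)" if T: "T \<ge> 0" for T
  proof -
    obtain M where M: "M \<ge> 0" "\<And>s. s \<in> {0..T} \<Longrightarrow> norm (k s) \<le> M"
      using cont_bound_Icc[OF k, of T] by blast
    obtain C where C: "C \<ge> 0" "\<And>s. s \<in> {0..T} \<Longrightarrow> norm (E 0 s) \<le> C"
      using cont_bound_Icc[OF cE, of T 0] by blast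
    have bnd: "norm (E n t) \<le> C * (M * t) ^ n / fact n" if t: "t \<in> {0..T}" for n t
    proof (rule iter_bound[where E=E and T=T and M=M and C=C])
      show "0 \<le> T" "0 \<le> M" "0 \<le> C" using T M C by auto
      show "\<And>t. t \<in> {0..T} \<Longrightarrow> norm (E 0 t) \<le> C" by (rule C(2))
      show "t \<in> {0..T}" by (rule t)
    next
      fix n t assume t: "t \<in> {0..T}"
      have "norm (E (Suc n) t) = norm (conv k (E n) t)" using Estep[of t n] t by simp
      also have "\<dots> \<le> M * integral {0..t} (\<lambda>s. norm (E n (t - s)))"
        by (rule conv_norm[OF Eai k]) (use M t in auto)
      finally show "norm (E (Suc n) t) \<le> M * integral {0..t} (\<lambda>s. norm (E n (t - s)))" .
    next
      fix n t assume t: "t \<in> {0..T}"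
      show "(\<lambda>s. norm (E n (t - s))) integrable_on {0..t}"
        using abs_integrable_reflect_t[OF Eai] by (simp add: absolutely_integrable_on_def)
    qed
    define a where "a n = C * (inverse (fact n) * (M * T) ^ n)" for n
    have "summable a" unfolding a_def by (intro summable_mult summable_exp)
    moreover have "norm (E n t) \<le> a n" if t: "t \<in> {0..T}" for n t
    proof -
      have "(M * t) ^ n \<le> (M * T) ^ n"
        using t M by (intro power_mono mult_left_mono) auto
      hence "C * (M * t) ^ n / fact n \<le> C * (M * T) ^ n / fact n"
        using C(1) by (intro divide_right_mono mult_left_mono) auto
      thus ?thesis using bnd[OF t, of n] by (simp add: a_def field_simps)
    qed
    ultimately show ?thesis by blast
  qed
  define K where "K t = g t + (\<Sum>n. E n t)" for t
  have Psum: "P n t = g t + (\<Sum>i<n. E i t)" for n t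
    by (induction n) (auto simp: E_def P_def)
  have tail: "\<exists>r. r \<longlonglongrightarrow> 0 \<and> (\<forall>n. \<forall>t\<in>{0..T}. norm (K t - P n t) \<le> r n)" if T: "T \<ge> 0" for T
  proof -
    obtain a where a: "summable a" "\<And>n t. t \<in> {0..T} \<Longrightarrow> norm (E n t) \<le> a n"
      using unif[OF T] by blast
    define r where "r n = suminf a - sum a {..<n}" for n
    have "(\<lambda>n. suminf a - sum a {..<n}) \<longlonglongrightarrow> suminf a - suminf a"
      by (intro tendsto_diff tendsto_const summable_LIMSEQ a(1))
    hence "r \<longlonglongrightarrow> 0" by (simp add: r_def[abs_def])
    moreover have "norm (K t - P n t) \<le> r n" if t: "t \<in> {0..T}" for n t
    proof -
      have sE: "summable (\<lambda>i. E i t)"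
        by (rule summable_comparison_test[OF _ a(1)]) (use a(2)[OF t] in blast)
      have "K t - P n t = (\<Sum>i. E (i + n) t)"
        by (simp add: K_def Psum suminf_minus_initial_segment[OF sE])
      also have "norm \<dots> \<le> (\<Sum>i. a (i + n))"
        by (rule norm_suminf_bound) (use a t in \<open>auto intro: summable_ignore_initial_segment\<close>)
      also have "\<dots> = r n" by (simp add: r_def suminf_minus_initial_segment[OF a(1)])
      finally show ?thesis .
    qed
    ultimately show ?thesis by blast
  qed
  have cK: "continuous_on {0..} K"
  proof (rule continuous_on_local_Icc)
    fix T :: real assume T: "T \<ge> 0"
    obtain r where r: "r \<longlonglongrightarrow> 0" "\<And>n t. t \<in> {0..T} \<Longrightarrow> norm (K t - P n t) \<le> r n"
      using tail[OF T] by blast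
    have "uniform_limit {0..T} P K sequentially"
    proof (rule uniform_limitI)
      fix e :: real assume e: "e > 0"
      have "\<forall>\<^sub>F n in sequentially. r n < e" using r(1) e by (rule order_tendstoD(2))
      thus "\<forall>\<^sub>F n in sequentially. \<forall>x\<in>{0..T}. dist (P n x) (K x) < e"
      proof (rule eventually_mono)
        fix n assume "r n < e"
        thus "\<forall>x\<in>{0..T}. dist (P n x) (K x) < e"
          using r(2)[of _ n] by (force simp: dist_norm norm_minus_commute)
      qed
    qed
    thus "continuous_on {0..T} K"
      by (rule uniform_limit_theorem[rotated])
         (auto intro!: always_eventually allI continuous_on_subset[OF cP])
  qed
  have eqK: "K t = g t - conv k K t" if t: "t \<ge> 0" for t
  proof -
    obtain r where r: "r \<longlonglongrightarrow> 0" "\<And>n s. s \<in> {0..t} \<Longrightarrow> norm (K s - P n s) \<le> r n"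
      using tail[OF t] by blast
    obtain M where M: "M \<ge> 0" "\<And>s. s \<in> {0..t} \<Longrightarrow> norm (k s) \<le> M"
      using cont_bound_Icc[OF k, of t] by blast
    have l1: "(\<lambda>n. K t - P n t) \<longlonglongrightarrow> 0"
      by (rule Lim_null_comparison[OF _ r(1)]) (use r(2) t in auto)
    hence "(\<lambda>n. K t - (K t - P n t)) \<longlonglongrightarrow> K t - 0" by (intro tendsto_diff tendsto_const)
    hence lP: "(\<lambda>n. P n t) \<longlonglongrightarrow> K t" by simp
    hence lP1: "(\<lambda>n. P (Suc n) t) \<longlonglongrightarrow> K t" by (rule filterlim_sequentially_Suc[THEN iffD2])
    have "(\<lambda>n. conv k K t - conv k (P n) t) \<longlonglongrightarrow> 0"
    proof (rule Lim_null_comparison)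
      have "(\<lambda>n. M * (t * r n)) \<longlonglongrightarrow> M * (t * 0)" by (intro tendsto_mult tendsto_const r(1))
      thus "(\<lambda>n. M * (t * r n)) \<longlonglongrightarrow> 0" by simp
      show "\<forall>\<^sub>F n in sequentially. norm (conv k K t - conv k (P n) t) \<le> M * (t * r n)"
      proof (rule always_eventually, rule allI)
        fix n
        have cd: "continuous_on {0..} (\<lambda>s. K s - P n s)" by (intro continuous_intros cK cP)
        have "norm (conv k K t - conv k (P n) t) = norm (conv k (\<lambda>s. K s - P n s) t)"
          by (simp add: conv_diff[OF cK cP k t])
        also have "\<dots> \<le> M * integral {0..t} (\<lambda>s. norm (K (t - s) - P n (t - s)))"
          by (rule conv_norm[OF absolutely_integrable_continuous_real[OF continuous_on_subset[OF cd]] k])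
             (use M in auto)
        also have "\<dots> \<le> M * integral {0..t} (\<lambda>s. r n)"
        proof (rule mult_left_mono[OF integral_le M(1)])
          show "(\<lambda>s. norm (K (t - s) - P n (t - s))) integrable_on {0..t}"
            using abs_integrable_reflect_t[OF absolutely_integrable_continuous_real[OF continuous_on_subset[OF cd]], of t]
            by (auto simp: absolutely_integrable_on_def)
          show "(\<lambda>s. r n) integrable_on {0..t}" by (rule integrable_continuous_interval[OF continuous_on_const])
          fix s assume "s \<in> {0..t}"
          hence "t - s \<in> {0..t}" by auto
          thus "norm (K (t - s) - P n (t - s)) \<le> r n" by (rule r(2))
        qed
        also have "\<dots> = M * (t * r n)" using t by simp
        finally show "norm (conv k K t - conv k (P n) t) \<le> M * (t * r n)" .
      qed
    qed
    hence "(\<lambda>n. g t - conv k K t + (conv k K t - conv k (P n) t)) \<longlonglongrightarrow> g t - conv k K t + 0"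
      by (intro tendsto_add tendsto_const)
    hence "(\<lambda>n. P (Suc n) t) \<longlonglongrightarrow> g t - conv k K t" by (simp add: P_def)
    from LIMSEQ_unique[OF lP1 this] show ?thesis .
  qed
  show ?thesis using cK eqK by blast
qed

lemma conv_diff_ai:
  fixes f1 f2 k :: "real \<Rightarrow> complex"
  assumes "f1 absolutely_integrable_on {0..t}" "f2 absolutely_integrable_on {0..t}" "continuous_on {0..} k"
  shows "conv k f1 t - conv k f2 t = conv k (\<lambda>s. f1 s - f2 s) t"
  unfolding conv_def
  by (simp add: integral_diff[OF conv_integrable[OF assms(1,3)] conv_integrable[OF assms(2,3)], symmetric]
      left_diff_distrib)

lemma at_within_ge_nontriv: "t \<ge> 0 \<Longrightarrow> at t within {0..} \<noteq> (bot :: real filter)"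
proof
  assume t: "t \<ge> 0" and b: "at t within {0..} = bot"
  have "at_right t \<le> at t within {0..}" by (rule at_le) (use t in auto)
  with b have "at_right t = (bot :: real filter)" by (simp add: bot_unique)
  thus False by simp
qed

theorem proposition2:
  fixes U :: "real \<Rightarrow> 'a::complex_hilbert \<Rightarrow> 'a" and z :: 'a
  assumes "C0_semigroup U"
    and "z \<in> gen_dom U"
    and "z \<in> adj_dom (gen_dom U) (gen U)"
    and "z \<noteq> 0"
  shows "\<exists>K \<eta>. gle_system U z K \<eta>
           \<and> (\<forall>K' \<eta>'. gle_system U z K' \<eta>' \<longrightarrow> (\<forall>t\<ge>0. K' t = K t \<and> \<eta>' t = \<eta> t))
           \<and> continuous_on {0..} K
           \<and> (\<forall>t\<ge>0. volterra_eq U z K t)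
           \<and> (\<forall>K'. continuous_on {0..} K' \<and> (\<forall>t\<ge>0. volterra_eq U z K' t)
                  \<longrightarrow> (\<forall>t\<ge>0. K' t = K t))
           \<and> (\<forall>t\<ge>0. \<eta> t = U t (projQ z (gen U z)) - integral {0..t} (\<lambda>s. K (t - s) *\<^sub>C U s z))"
proof -
  note sg = assms(1)
  define c where "c = cinner z z"
  define v where "v = projQ z (adj (gen_dom U) (gen U) z)"
  define L where "L = gen U z"
  define w where "w = projQ z L"
  define k where "k s = cinner (U s z) v / c" for s
  define g where "g t = cinner (U t w) v / c" for t
  define I where "I K t = integral {0..t} (\<lambda>s. K (t - s) *\<^sub>C U s z)" for K :: "real \<Rightarrow> complex" and t
  have c0: "c \<noteq> 0" unfolding c_def using assms(4) by (simp add: cinner_self_norm)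
  have blc: "bounded_linear (\<lambda>x. cinner x v)" by (rule bounded_linear_cinner_left)
  have kc: "continuous_on {0..} k"
    unfolding k_def using c0 by (intro continuous_intros bounded_linear.continuous_on[OF blc] sg_cont[OF sg]) auto
  have gc: "continuous_on {0..} g"
    unfolding g_def using c0 by (intro continuous_intros bounded_linear.continuous_on[OF blc] sg_cont[OF sg]) auto
  have volt_iff: "volterra_eq U z K' t \<longleftrightarrow> K' t = g t - conv k K' t" for K' t
    by (simp add: volterra_eq_def conv_def k_def g_def v_def w_def L_def c_def)
  have key: "cinner (I K' t) v / c = conv k K' t" if K': "K' absolutely_integrable_on {0..t}" for K' t
  proof -
    have int: "(\<lambda>s. K' (t - s) *\<^sub>C U s z) integrable_on {0..t}"
      by (rule integrable_bilinear_continuous[OF bounded_bilinear_cscale abs_integrable_reflect_t[OF K']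
            continuous_on_subset[OF sg_cont[OF sg]]]) auto
    have "cinner (I K' t) v = integral {0..t} (\<lambda>s. cinner (K' (t - s) *\<^sub>C U s z) v)"
      unfolding I_def using integral_linear[OF int blc] by (simp add: o_def)
    also have "\<dots> = integral {0..t} (\<lambda>s. K' (t - s) * cinner (U s z) v)"
      by (simp add: cinner_cscale_left)
    finally have "cinner (I K' t) v / c = integral {0..t} (\<lambda>s. K' (t - s) * cinner (U s z) v / c)"
      by simp
    also have "\<dots> = conv k K' t"
      unfolding conv_def k_def by (simp add: times_divide_eq_right)
    finally show ?thesis .
  qed
  have Uw: "U t w = U t L - U t (projP z L)" if t: "t \<ge> 0" for t
    unfolding w_def projQ_def by (rule linear_diff[OF bounded_linear.linear[OF sg_bl[OF sg t]]])
  have deriv: "((\<lambda>s. U s z) has_vector_derivative U t L) (at t within {0..})" if t: "t \<ge> 0" for t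
    unfolding L_def by (rule sg_deriv[OF sg assms(2) t])
  obtain K where Kc: "continuous_on {0..} K" and Keq: "\<And>t. t \<ge> 0 \<Longrightarrow> K t = g t - conv k K t"
    using volterra_exists[OF kc gc] by blast
  have Kai: "K absolutely_integrable_on {0..t}" for t
    by (rule absolutely_integrable_continuous_real[OF continuous_on_subset[OF Kc]]) auto
  define \<eta> where "\<eta> t = U t w - I K t" for t
  have gle: "gle_system U z K \<eta>"
    unfolding gle_system_def
  proof (intro conjI allI impI)
    fix t :: real assume t: "t \<ge> 0"
    show "K absolutely_integrable_on {0..t}" by (rule Kai)
    have "U t (projP z (gen U z)) + \<eta> t + integral {0..t} (\<lambda>s. K (t - s) *\<^sub>C U s z) = U t L"
      by (simp add: \<eta>_def I_def Uw[OF t] L_def)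
    thus "((\<lambda>s. U s z) has_vector_derivative
           (U t (projP z (gen U z)) + \<eta> t + integral {0..t} (\<lambda>s. K (t - s) *\<^sub>C U s z))) (at t within {0..})"
      using deriv[OF t] by simp
    have "cinner (\<eta> t) v / c = g t - cinner (I K t) v / c"
      by (simp add: \<eta>_def cinner_diff_left g_def diff_divide_distrib)
    also have "\<dots> = K t" using key[OF Kai] Keq[OF t] by simp
    finally show "K t = cinner (\<eta> t) (projQ z (adj (gen_dom U) (gen U) z)) / cinner z z"
      by (simp add: v_def c_def)
  qed
  have uniq: "\<forall>t\<ge>0. K' t = K t \<and> \<eta>' t = \<eta> t" if G: "gle_system U z K' \<eta>'" for K' \<eta>'
  proof -
    have K'ai: "K' absolutely_integrable_on {0..t}" if "t \<ge> 0" for t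
      using G that by (simp add: gle_system_def)
    have \<eta>': "\<eta>' t = U t w - I K' t" if t: "t \<ge> 0" for t
    proof -
      have d: "((\<lambda>s. U s z) has_vector_derivative
           (U t (projP z L) + \<eta>' t + I K' t)) (at t within {0..})"
        using G t by (simp add: gle_system_def I_def L_def)
      have h: "U t (projP z L) + \<eta>' t + I K' t = U t L"
        by (rule vector_derivative_unique_within[OF at_within_ge_nontriv[OF t] d deriv[OF t]])
      show ?thesis unfolding Uw[OF t] h[symmetric] by (simp add: algebra_simps)
    qed
    have K'eq: "K' t = g t - conv k K' t" if t: "t \<ge> 0" for t
    proof -
      have "K' t = cinner (\<eta>' t) v / c"
        using G t by (simp add: gle_system_def v_def c_def)
      also have "\<dots> = g t - cinner (I K' t) v / c"
        by (simp add: \<eta>'[OF t] cinner_diff_left g_def diff_divide_distrib)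
      also have "\<dots> = g t - conv k K' t" using key[OF K'ai[OF t]] by simp
      finally show ?thesis .
    qed
    have D0: "K' t - K t = 0" if t: "t \<ge> 0" for t
    proof (rule volterra_unique[OF kc _ _ t, where D="\<lambda>s. K' s - K s"])
      fix t :: real assume t: "t \<ge> 0"
      show "(\<lambda>s. K' s - K s) absolutely_integrable_on {0..t}"
        by (rule set_integral_diff(1)[OF K'ai[OF t] Kai])
      show "K' t - K t = - conv k (\<lambda>s. K' s - K s) t"
        unfolding conv_diff_ai[OF K'ai[OF t] Kai kc, symmetric] K'eq[OF t] Keq[OF t] by simp
    qed
    show ?thesis
    proof (intro allI impI conjI)
      fix t :: real assume t: "t \<ge> 0"
      show KK: "K' t = K t" using D0[OF t] by simp
      have "I K' t = I K t" unfolding I_def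
        by (rule integral_cong) (use D0 in \<open>auto\<close>)
      thus "\<eta>' t = \<eta> t" using \<eta>'[OF t] by (simp add: \<eta>_def)
    qed
  qed
  have vK: "\<forall>t\<ge>0. volterra_eq U z K t" using Keq by (simp add: volt_iff)
  have uniqV: "\<forall>t\<ge>0. K' t = K t" if K': "continuous_on {0..} K' \<and> (\<forall>t\<ge>0. volterra_eq U z K' t)" for K'
  proof (intro allI impI)
    fix t :: real assume t: "t \<ge> 0"
    have K'c: "continuous_on {0..} K'" and K'eq: "\<And>t. t \<ge> 0 \<Longrightarrow> K' t = g t - conv k K' t"
      using K' by (auto simp: volt_iff)
    have "K' t - K t = 0"
    proof (rule volterra_unique[OF kc _ _ t, where D="\<lambda>s. K' s - K s"])
      fix t :: real assume t: "t \<ge> 0"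
      show "(\<lambda>s. K' s - K s) absolutely_integrable_on {0..t}"
        by (rule absolutely_integrable_continuous_real[OF continuous_on_subset[of "{0..}"]])
           (auto intro!: continuous_intros K'c Kc)
      show "K' t - K t = - conv k (\<lambda>s. K' s - K s) t"
        unfolding conv_diff[OF K'c Kc kc t, symmetric] K'eq[OF t] Keq[OF t] by simp
    qed
    thus "K' t = K t" by simp
  qed
  have \<eta>def: "\<forall>t\<ge>0. \<eta> t = U t (projQ z (gen U z)) - integral {0..t} (\<lambda>s. K (t - s) *\<^sub>C U s z)"
    by (simp add: \<eta>_def w_def L_def I_def)
  show ?thesis
    by (rule exI[of _ K], rule exI[of _ \<eta>]) (use gle uniq Kc vK uniqV \<eta>def in blast)
qed

end
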